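(* Let $S$ be a finite set of $N$ elements and let $n$ be a power of $2$. Consider the knockout tournament among $n$ elements on $S$ described in the context. Then the winner of the tournament is small with probability at least $1-2^{-(n+1)}$.
   Context: Elements of $S$ are totally ordered but accessible only through comparisons; each comparison of two distinct elements reports the wrong relation with probability at most $p$, for a fixed constant $p\in[0,\tfrac12)$, independently of all other comparisons (copies of the same element are treated as distinct with a consistent tie-breaking order). An element is small if its rank in $S$ is at most $\frac34 N$. Let $c_p$ be a positive integer such that, for every $t\ge0$ with $2c_pt$ integer, the majority of $2c_pt+1$ independent comparisons of two distinct elements is correct with probability at least $1-e^{-t}$ (such a constant exists, e.g. $c_p=\lceil 4(1-p)/(1-2p)^2\rceil$). The tournament among $n$ elements: first form $S_n$ by sampling $n$ elements from $S$ uniformly at random with replacement. For $i=1,\dots,\log_2 n$, the elements of $S_{n/2^{i-1}}$ are split (without replacement) into $n/2^i$ pairs, and each pair $x,y$ plays a match consisting of $2c_p\lceil 2^i\rceil+5$ comparisons between $x$ and $y$; the winner of the match is the element reported smaller by the majority of these comparisons, and the winners form $S_{n/2^i}$. The unique element of $S_1$ is the winner of the tournament. *)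

theory Defs
  imports "HOL-Probability.Probability"
begin

(* Copies of elements: (value, sample slot). True order: by value, ties broken
   consistently by slot index. *)
definition copy_less :: "('a::linorder \<times> nat) \<Rightarrow> ('a \<times> nat) \<Rightarrow> bool" where
  "copy_less x y \<longleftrightarrow> fst x < fst y \<or> (fst x = fst y \<and> snd x < snd y)"

(* Rank of x in S (number of elements of S strictly below x, i.e. 0-based) *)
definition rank :: "'a::linorder set \<Rightarrow> 'a \<Rightarrow> nat" where
  "rank S x = card {y \<in> S. y < x}"

definition small :: "'a::linorder set \<Rightarrow> 'a \<Rightarrow> bool" where
  "small S x \<longleftrightarrow> real (rank S x) \<le> 3/4 * real (card S)"

(* number of wrong answers among m independent comparisons,
   the k-th one being wrong with probability e k *)
primrec errs_pmf :: "(nat \<Rightarrow> real) \<Rightarrow> nat \<Rightarrow> nat pmf" where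
  "errs_pmf e 0 = return_pmf 0"
| "errs_pmf e (Suc m) =
     do { b \<leftarrow> bernoulli_pmf (e m); c \<leftarrow> errs_pmf e m;
          return_pmf (c + (if b then 1 else 0)) }"

(* a match of m comparisons between x and y; result True iff x wins,
   i.e. x is reported smaller by the majority *)
definition match_pmf :: "(nat \<Rightarrow> real) \<Rightarrow> nat \<Rightarrow> ('a::linorder \<times> nat) \<Rightarrow> ('a \<times> nat) \<Rightarrow> bool pmf" where
  "match_pmf e m x y =
     map_pmf (\<lambda>w. if copy_less x y then 2 * w < m else 2 * w > m) (errs_pmf e m)"

(* round i: adjacent elements are paired; err i x y k is the error probability
   of the k-th comparison of the match between x and y in round i *)
fun play_round :: "nat \<Rightarrow> (nat \<Rightarrow> ('a::linorder \<times> nat) \<Rightarrow> ('a \<times> nat) \<Rightarrow> nat \<Rightarrow> real)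
                    \<Rightarrow> nat \<Rightarrow> ('a \<times> nat) list \<Rightarrow> ('a \<times> nat) list pmf" where
  "play_round c err i (x # y # rest) =
     do { w \<leftarrow> match_pmf (err i x y) (2 * c * 2 ^ i + 5) x y;
          ws \<leftarrow> play_round c err i rest;
          return_pmf ((if w then x else y) # ws) }"
| "play_round c err i xs = return_pmf []"

primrec play_rounds :: "nat \<Rightarrow> (nat \<Rightarrow> ('a::linorder \<times> nat) \<Rightarrow> ('a \<times> nat) \<Rightarrow> nat \<Rightarrow> real)
                    \<Rightarrow> nat \<Rightarrow> nat \<Rightarrow> ('a \<times> nat) list \<Rightarrow> ('a \<times> nat) list pmf" where
  "play_rounds c err i 0 xs = return_pmf xs"
| "play_rounds c err i (Suc r) xs = play_round c err i xs \<bind> play_rounds c err (Suc i) r"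

primrec sample_pmf :: "'a set \<Rightarrow> nat \<Rightarrow> 'a list pmf" where
  "sample_pmf S 0 = return_pmf []"
| "sample_pmf S (Suc m) =
     do { x \<leftarrow> pmf_of_set S; xs \<leftarrow> sample_pmf S m; return_pmf (x # xs) }"

definition tournament :: "'a::linorder set \<Rightarrow> nat \<Rightarrow> (nat \<Rightarrow> ('a \<times> nat) \<Rightarrow> ('a \<times> nat) \<Rightarrow> nat \<Rightarrow> real)
                          \<Rightarrow> nat \<Rightarrow> 'a pmf" where
  "tournament S c err k =
     do { xs \<leftarrow> sample_pmf S (2 ^ k);
          ws \<leftarrow> play_rounds c err 1 k (zip xs [0..<2 ^ k]);
          return_pmf (fst (hd ws)) }"

end

theory Submission
  imports Defs
begin


lemma prob_bind_pmf:
  "measure_pmf.prob (bind_pmf M f) A = (\<integral>x. measure_pmf.prob (f x) A \<partial>M)"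
proof -
  have "ennreal (measure_pmf.prob (bind_pmf M f) A) = emeasure (bind_pmf M f) A"
    by (simp add: measure_pmf.emeasure_eq_measure)
  also have "\<dots> = (\<integral>\<^sup>+x. emeasure (f x) A \<partial>M)" by simp
  also have "\<dots> = (\<integral>\<^sup>+x. ennreal (measure_pmf.prob (f x) A) \<partial>M)"
    by (simp add: measure_pmf.emeasure_eq_measure)
  also have "\<dots> = ennreal (\<integral>x. measure_pmf.prob (f x) A \<partial>M)"
    by (rule nn_integral_eq_integral)
       (auto intro!: measure_pmf.integrable_const_bound[where B=1])
  finally show ?thesis
    by (subst (asm) ennreal_inj) (auto intro!: integral_nonneg_AE)
qed

lemma play_round_append:
  "even (length xs) \<Longrightarrow> play_round c err i (xs @ ys) =
     bind_pmf (play_round c err i xs) (\<lambda>a. bind_pmf (play_round c err i ys) (\<lambda>b. return_pmf (a @ b)))"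
proof (induction xs rule: induct_list012)
  case 1
  then show ?case by (simp add: bind_return_pmf bind_return_pmf')
next
  case (2 x)
  then show ?case by simp
next
  case (3 x y zs)
  then show ?case by (simp add: bind_assoc_pmf bind_return_pmf)
qed

lemma play_round_len:
  "ws \<in> set_pmf (play_round c err i xs) \<Longrightarrow> length ws = length xs div 2"
  by (induction c err i xs arbitrary: ws rule: play_round.induct) auto

lemma play_rounds_len:
  "length xs = 2 ^ r \<Longrightarrow> ws \<in> set_pmf (play_rounds c err i r xs) \<Longrightarrow> length ws = 1"
proof (induction r arbitrary: i xs ws)
  case 0
  then show ?case by simp
next
  case (Suc r)
  from Suc.prems obtain a where a: "a \<in> set_pmf (play_round c err i xs)"
    and ws: "ws \<in> set_pmf (play_rounds c err (Suc i) r a)" by auto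
  have "length a = 2 ^ r" using play_round_len[OF a] Suc.prems(1) by simp
  then show ?case using Suc.IH ws by blast
qed

lemma play_rounds_0: "play_rounds c err i 0 = return_pmf"
  by (rule ext) simp

lemma play_rounds_last:
  "play_rounds c err i (Suc r) xs = bind_pmf (play_rounds c err i r xs) (play_round c err (i + r))"
proof (induction r arbitrary: i xs)
  case 0
  then show ?case by (simp add: bind_return_pmf bind_return_pmf' play_rounds_0)
next
  case (Suc r)
  have "play_rounds c err i (Suc (Suc r)) xs =
        bind_pmf (play_round c err i xs) (play_rounds c err (Suc i) (Suc r))" by simp
  also have "\<dots> = bind_pmf (play_round c err i xs)
      (\<lambda>a. bind_pmf (play_rounds c err (Suc i) r a) (play_round c err (Suc i + r)))"
    by (rule arg_cong[of _ _ "bind_pmf (play_round c err i xs)"], rule ext, rule Suc.IH)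
  finally show ?case by (simp add: bind_assoc_pmf)
qed

lemma play_rounds_append:
  "length xs = 2 ^ r \<Longrightarrow> play_rounds c err i r (xs @ ys) =
     bind_pmf (play_rounds c err i r xs) (\<lambda>a. bind_pmf (play_rounds c err i r ys) (\<lambda>b. return_pmf (a @ b)))"
proof (induction r arbitrary: i xs ys)
  case 0
  then show ?case by (simp add: bind_return_pmf)
next
  case (Suc r)
  let ?pr = "play_round c err i" and ?ps = "play_rounds c err (Suc i) r"
  have ev: "even (length xs)" using Suc.prems by simp
  have "play_rounds c err i (Suc r) (xs @ ys) = bind_pmf (?pr (xs @ ys)) ?ps" by simp
  also have "\<dots> = bind_pmf (?pr xs) (\<lambda>a. bind_pmf (?pr ys) (\<lambda>b. ?ps (a @ b)))"
    by (simp add: play_round_append[OF ev] bind_assoc_pmf bind_return_pmf)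
  also have "\<dots> = bind_pmf (?pr xs) (\<lambda>a. bind_pmf (?pr ys) (\<lambda>b.
       bind_pmf (?ps a) (\<lambda>a'. bind_pmf (?ps b) (\<lambda>b'. return_pmf (a' @ b')))))"
  proof (rule bind_pmf_cong[OF refl])
    fix a assume a: "a \<in> set_pmf (?pr xs)"
    have "length a = 2 ^ r" using play_round_len[OF a] Suc.prems by simp
    then show "bind_pmf (?pr ys) (\<lambda>b. ?ps (a @ b)) = bind_pmf (?pr ys) (\<lambda>b.
       bind_pmf (?ps a) (\<lambda>a'. bind_pmf (?ps b) (\<lambda>b'. return_pmf (a' @ b'))))"
      using Suc.IH by simp
  qed
  also have "\<dots> = bind_pmf (?pr xs) (\<lambda>a. bind_pmf (?ps a) (\<lambda>a'. bind_pmf (?pr ys) (\<lambda>b.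
       bind_pmf (?ps b) (\<lambda>b'. return_pmf (a' @ b')))))"
    by (subst bind_commute_pmf) (rule refl)
  finally show ?case by (simp add: bind_assoc_pmf)
qed

lemma sample_append:
  "sample_pmf S (a + b) = bind_pmf (sample_pmf S a) (\<lambda>xs. bind_pmf (sample_pmf S b) (\<lambda>ys. return_pmf (xs @ ys)))"
  by (induction a) (simp_all add: bind_return_pmf bind_return_pmf' bind_assoc_pmf)

lemma sample_len: "xs \<in> set_pmf (sample_pmf S m) \<Longrightarrow> length xs = m"
  by (induction m arbitrary: xs) auto



definition W :: "'a::linorder set \<Rightarrow> nat \<Rightarrow> (nat \<Rightarrow> ('a \<times> nat) \<Rightarrow> ('a \<times> nat) \<Rightarrow> nat \<Rightarrow> real)
   \<Rightarrow> nat \<Rightarrow> nat list \<Rightarrow> ('a \<times> nat) pmf" where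
  "W S c err r sl = bind_pmf (sample_pmf S (2^r))
     (\<lambda>xs. bind_pmf (play_rounds c err 1 r (zip xs sl)) (\<lambda>ws. return_pmf (hd ws)))"

definition F where
  "F c err j u v = map_pmf (\<lambda>w. if w then u else v) (match_pmf (err j u v) (2*c*2^j+5) u v)"

lemma final_round:
  assumes "length u = 1" "length v = 1"
  shows "bind_pmf (play_round c err j (u @ v)) (\<lambda>ws. return_pmf (hd ws)) = F c err j (hd u) (hd v)"
proof -
  obtain x where u: "u = [x]" using assms(1) by (cases u) auto
  obtain y where v: "v = [y]" using assms(2) by (cases v) auto
  show ?thesis unfolding u v list.sel(1) append.simps F_def
    by (simp add: bind_assoc_pmf bind_return_pmf map_pmf_def)
qed

lemma W_step:
  assumes l1: "length sl1 = 2^r" and l2: "length sl2 = 2^r"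
  shows "W S c err (Suc r) (sl1 @ sl2) =
     bind_pmf (W S c err r sl1) (\<lambda>u. bind_pmf (W S c err r sl2) (\<lambda>v. F c err (Suc r) u v))"
proof -
  let ?s = "sample_pmf S (2^r)"
  let ?P1 = "\<lambda>a. play_rounds c err 1 r (zip a sl1)"
  let ?P2 = "\<lambda>b. play_rounds c err 1 r (zip b sl2)"
  have "W S c err (Suc r) (sl1 @ sl2) = bind_pmf ?s (\<lambda>a. bind_pmf ?s (\<lambda>b.
      bind_pmf (play_rounds c err 1 (Suc r) (zip (a @ b) (sl1 @ sl2))) (\<lambda>ws. return_pmf (hd ws))))"
    unfolding W_def by (simp add: mult_2 sample_append bind_assoc_pmf bind_return_pmf)
  also have "\<dots> = bind_pmf ?s (\<lambda>a. bind_pmf ?s (\<lambda>b.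
      bind_pmf (?P1 a) (\<lambda>u. bind_pmf (?P2 b) (\<lambda>v. F c err (Suc r) (hd u) (hd v)))))"
  proof (intro bind_pmf_cong[OF refl])
    fix a b assume a: "a \<in> set_pmf ?s" and b: "b \<in> set_pmf ?s"
    have la: "length a = 2^r" and lb: "length b = 2^r" using sample_len a b by auto
    have lz: "length (zip a sl1) = 2^r" using la l1 by simp
    have "zip (a @ b) (sl1 @ sl2) = zip a sl1 @ zip b sl2" using la l1 by simp
    then have "bind_pmf (play_rounds c err 1 (Suc r) (zip (a @ b) (sl1 @ sl2))) (\<lambda>ws. return_pmf (hd ws))
       = bind_pmf (?P1 a) (\<lambda>u. bind_pmf (?P2 b) (\<lambda>v.
           bind_pmf (play_round c err (Suc r) (u @ v)) (\<lambda>ws. return_pmf (hd ws))))"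
      by (simp add: play_rounds_last play_rounds_append[OF lz] bind_assoc_pmf bind_return_pmf
          del: play_rounds.simps)
    also have "\<dots> = bind_pmf (?P1 a) (\<lambda>u. bind_pmf (?P2 b) (\<lambda>v. F c err (Suc r) (hd u) (hd v)))"
    proof (intro bind_pmf_cong[OF refl])
      fix u v assume u: "u \<in> set_pmf (?P1 a)" and v: "v \<in> set_pmf (?P2 b)"
      have "length u = 1" using play_rounds_len[OF lz u] .
      moreover have "length v = 1" using play_rounds_len[of "zip b sl2" r, OF _ v] lb l2 by simp
      ultimately show "bind_pmf (play_round c err (Suc r) (u @ v)) (\<lambda>ws. return_pmf (hd ws))
          = F c err (Suc r) (hd u) (hd v)" by (rule final_round)
    qed
    finally show "bind_pmf (play_rounds c err 1 (Suc r) (zip (a @ b) (sl1 @ sl2))) (\<lambda>ws. return_pmf (hd ws))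
       = bind_pmf (?P1 a) (\<lambda>u. bind_pmf (?P2 b) (\<lambda>v. F c err (Suc r) (hd u) (hd v)))" .
  qed
  also have "\<dots> = bind_pmf ?s (\<lambda>a. bind_pmf (?P1 a) (\<lambda>u. bind_pmf ?s (\<lambda>b.
      bind_pmf (?P2 b) (\<lambda>v. F c err (Suc r) (hd u) (hd v)))))"
    by (subst bind_commute_pmf) (rule refl)
  also have "\<dots> = bind_pmf (W S c err r sl1) (\<lambda>u. bind_pmf (W S c err r sl2) (\<lambda>v. F c err (Suc r) u v))"
    unfolding W_def by (simp add: bind_assoc_pmf bind_return_pmf)
  finally show ?thesis .
qed



lemma pmf_integrable_bounded:
  fixes g :: "'b \<Rightarrow> real"
  assumes "\<And>x. \<bar>g x\<bar> \<le> B"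
  shows "integrable (measure_pmf M) g"
  by (rule measure_pmf.integrable_const_bound[where B=B]) (use assms in auto)

lemma comb:
  fixes U V :: "'b pmf" and f :: "'b \<Rightarrow> 'b \<Rightarrow> 'b pmf" and L :: "'b \<Rightarrow> bool"
  assumes qU: "measure_pmf.prob U {u. L u} \<le> Q" and qV: "measure_pmf.prob V {v. L v} \<le> Q"
    and e0: "0 \<le> \<epsilon>" and e1: "\<epsilon> \<le> 1/2"
    and hf: "\<And>u v. measure_pmf.prob (f u v) {z. L z} \<le>
              (if L u \<and> L v then 1 else if L u \<or> L v then \<epsilon> else 0)"
  shows "measure_pmf.prob (bind_pmf U (\<lambda>u. bind_pmf V (f u))) {z. L z} \<le> (1 - 2*\<epsilon>) * Q^2 + 2*\<epsilon>*Q"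
proof -
  define A where "A = {z. L z}"
  define ind where "ind = (\<lambda>z. indicator A z :: real)"
  define qu where "qu = measure_pmf.prob U A"
  define qv where "qv = measure_pmf.prob V A"
  have ind01: "0 \<le> ind z \<and> ind z \<le> 1" for z by (simp add: ind_def indicator_def)
  define h where "h = (\<lambda>u v. (1 - 2*\<epsilon>) * ind u * ind v + \<epsilon> * ind u + \<epsilon> * ind v)"
  have hb: "measure_pmf.prob (f u v) A \<le> h u v" for u v
    using hf[of u v] by (auto simp: h_def ind_def A_def indicator_def)
  have hbd: "\<bar>h u v\<bar> \<le> 3" for u v
    using ind01[of u] ind01[of v] e0 e1 unfolding h_def
    by (auto simp: ind_def indicator_def)
  have lin: "(\<integral>v. a * ind v + b \<partial>M) = a * measure_pmf.prob M A + b" for a b and M :: "'b pmf"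
  proof -
    have ii: "integrable (measure_pmf M) (\<lambda>v. a * ind v)"
      by (rule pmf_integrable_bounded[where B="\<bar>a\<bar>"]) (auto simp: abs_mult ind_def indicator_def)
    show ?thesis
      by (subst Bochner_Integration.integral_add[OF ii]) (auto simp: ind_def)
  qed
  have iV: "(\<integral>v. h u v \<partial>V) = (1 - 2*\<epsilon>) * ind u * qv + \<epsilon> * ind u + \<epsilon> * qv" for u
  proof -
    have "(\<integral>v. h u v \<partial>V) = (\<integral>v. ((1 - 2*\<epsilon>) * ind u + \<epsilon>) * ind v + \<epsilon> * ind u \<partial>V)"
      by (rule arg_cong[where f="integral\<^sup>L (measure_pmf V)"]) (auto simp: h_def algebra_simps)
    also have "\<dots> = ((1 - 2*\<epsilon>) * ind u + \<epsilon>) * qv + \<epsilon> * ind u"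
      by (simp only: lin qv_def)
    finally show ?thesis by (simp add: algebra_simps)
  qed
  have "measure_pmf.prob (bind_pmf U (\<lambda>u. bind_pmf V (f u))) A = (\<integral>u. (\<integral>v. measure_pmf.prob (f u v) A \<partial>V) \<partial>U)"
    by (simp add: prob_bind_pmf)
  also have "\<dots> \<le> (\<integral>u. (\<integral>v. h u v \<partial>V) \<partial>U)"
  proof (rule integral_mono)
    show "integrable (measure_pmf U) (\<lambda>u. \<integral>v. measure_pmf.prob (f u v) A \<partial>V)"
      by (rule pmf_integrable_bounded[where B=1])
         (auto intro!: integral_nonneg_AE measure_pmf.integral_le_const
               pmf_integrable_bounded[where B=1])
    show "integrable (measure_pmf U) (\<lambda>u. \<integral>v. h u v \<partial>V)"
    proof (rule pmf_integrable_bounded[where B=3])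
      fix u
      have q: "0 \<le> qv" "qv \<le> 1" by (auto simp: qv_def)
      have i: "0 \<le> ind u" "ind u \<le> 1" using ind01 by auto
      have "0 \<le> (1 - 2*\<epsilon>) * ind u * qv" using q i e1 by auto
      moreover have "(1 - 2*\<epsilon>) * ind u * qv \<le> 1" using q i e1 e0
        by (intro mult_le_one) auto
      moreover have "\<epsilon> * ind u \<le> 1" "\<epsilon> * qv \<le> 1" "0 \<le> \<epsilon> * ind u" "0 \<le> \<epsilon> * qv"
        using q i e1 e0 by (auto intro: mult_le_one)
      ultimately show "\<bar>\<integral>v. h u v \<partial>V\<bar> \<le> 3" unfolding iV by linarith
    qed
    fix u show "(\<integral>v. measure_pmf.prob (f u v) A \<partial>V) \<le> (\<integral>v. h u v \<partial>V)"
      by (rule integral_mono[OF pmf_integrable_bounded[where B=1] pmf_integrable_bounded[where B=3, OF hbd] hb]) auto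
  qed
  also have "\<dots> = (\<integral>u. ((1 - 2*\<epsilon>) * qv + \<epsilon>) * ind u + \<epsilon> * qv \<partial>U)"
    by (rule arg_cong[where f="integral\<^sup>L (measure_pmf U)"]) (auto simp: iV algebra_simps)
  also have "\<dots> = ((1 - 2*\<epsilon>) * qv + \<epsilon>) * qu + \<epsilon> * qv"
    by (simp only: lin qu_def)
  also have "\<dots> = (1 - 2*\<epsilon>) * qv * qu + \<epsilon> * qu + \<epsilon> * qv"
    by (simp add: algebra_simps)
  also have "\<dots> \<le> (1 - 2*\<epsilon>) * Q^2 + 2*\<epsilon>*Q"
  proof -
    have "0 \<le> qu" "0 \<le> qv" "qu \<le> Q" "qv \<le> Q" using qU qV by (auto simp: qu_def qv_def A_def)
    then have "qv * qu \<le> Q^2" by (simp add: power2_eq_square mult_mono)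
    then have "(1 - 2*\<epsilon>) * (qv * qu) \<le> (1 - 2*\<epsilon>) * Q^2" using e1 by (intro mult_left_mono) auto
    moreover have "\<epsilon> * qu \<le> \<epsilon> * Q" "\<epsilon> * qv \<le> \<epsilon> * Q"
      using \<open>qu \<le> Q\<close> \<open>qv \<le> Q\<close> e0 by (auto intro: mult_left_mono)
    ultimately show ?thesis by (simp add: algebra_simps)
  qed
  finally show ?thesis by (simp add: A_def)
qed



lemma small_mono: "finite S \<Longrightarrow> y \<le> x \<Longrightarrow> small S x \<Longrightarrow> small S y"
proof -
  assume f: "finite S" and yx: "y \<le> x" and s: "small S x"
  have "{z \<in> S. z < y} \<subseteq> {z \<in> S. z < x}" using yx by auto
  then have "rank S y \<le> rank S x" unfolding rank_def using f by (intro card_mono) auto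
  then show ?thesis using s unfolding small_def by linarith
qed

lemma match_bound:
  fixes S :: "'a::linorder set" and err :: "nat \<Rightarrow> ('a \<times> nat) \<Rightarrow> ('a \<times> nat) \<Rightarrow> nat \<Rightarrow> real"
  assumes fin: "finite S" and c: "c > 0"
    and H: "\<forall>(t::real) (m::nat) (e::nat \<Rightarrow> real). t \<ge> 0 \<longrightarrow> real m = 2 * real c * t + 1 \<longrightarrow>
           (\<forall>j. 0 \<le> e j \<and> e j \<le> p) \<longrightarrow>
           measure_pmf.prob (errs_pmf e m) {w. 2 * w < m} \<ge> 1 - exp (- t)"
    and E: "\<forall>i x y j. 0 \<le> err i x y j \<and> err i x y j \<le> p"
  shows "measure_pmf.prob (F c err j u v) {z. \<not> small S (fst z)} \<le>
    (if \<not> small S (fst u) \<and> \<not> small S (fst v) then 1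
     else if \<not> small S (fst u) \<or> \<not> small S (fst v) then exp (- (2^j)) else 0)"
proof -
  define m where "m = 2*c*2^j+5"
  define t :: real where "t = 2^j + 2 / real c"
  define M where "M = errs_pmf (err j u v) m"
  have t0: "t \<ge> 0" unfolding t_def by simp
  have mt: "real m = 2 * real c * t + 1" unfolding m_def t_def using c by (simp add: field_simps)
  have "measure_pmf.prob M {w. 2 * w < m} \<ge> 1 - exp (- t)"
    using H t0 mt E unfolding M_def by blast
  moreover have "exp (- t) \<le> exp (- (2^j))" unfolding t_def by simp
  moreover have "measure_pmf.prob M (UNIV - {w. 2 * w < m}) = 1 - measure_pmf.prob M {w. 2 * w < m}"
    using measure_pmf.prob_compl[of "{w. 2 * w < m}" M] by simp
  ultimately have key: "measure_pmf.prob M (UNIV - {w. 2 * w < m}) \<le> exp (- (2^j))" by linarith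
  have FF: "F c err j u v = map_pmf (\<lambda>e. if (if copy_less u v then 2 * e < m else 2 * e > m) then u else v) M"
    unfolding F_def match_pmf_def M_def m_def by (simp add: pmf.map_comp o_def)
  let ?L = "\<lambda>z::('a \<times> nat). \<not> small S (fst z)"
  show ?thesis
  proof (cases "?L u")
    case Lu: True
    show ?thesis
    proof (cases "?L v")
      case True
      then show ?thesis using Lu by simp
    next
      case Lv: False
      have "\<not> fst u \<le> fst v" using small_mono[OF fin, of "fst u" "fst v"] Lu Lv by auto
      then have "\<not> copy_less u v" unfolding copy_less_def by auto
      then have "measure_pmf.prob (F c err j u v) {z. ?L z} = measure_pmf.prob M {e. 2 * e > m}"
        unfolding FF using Lu Lv by (simp add: vimage_def)
      also have "\<dots> \<le> measure_pmf.prob M (UNIV - {w. 2 * w < m})"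
        by (rule measure_pmf.finite_measure_mono) auto
      finally show ?thesis using key Lu Lv by simp
    qed
  next
    case Lu: False
    show ?thesis
    proof (cases "?L v")
      case Lv: True
      have "\<not> fst v \<le> fst u" using small_mono[OF fin, of "fst v" "fst u"] Lu Lv by auto
      then have "copy_less u v" unfolding copy_less_def by auto
      then have "measure_pmf.prob (F c err j u v) {z. ?L z} = measure_pmf.prob M (UNIV - {w. 2 * w < m})"
        unfolding FF using Lu Lv by (simp add: vimage_def set_diff_eq)
      then show ?thesis using key Lu Lv by simp
    next
      case Lv: False
      have "measure_pmf.prob (F c err j u v) {z. ?L z} = measure_pmf.prob M {}"
        unfolding FF using Lu Lv by (simp add: vimage_def)
      then show ?thesis using Lu Lv by simp
    qed
  qed
qed

lemma exp2_ge6: "exp (2::real) \<ge> 6"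
proof -
  have "(11/10::real) ^ 20 \<le> exp (1/10) ^ 20"
    by (rule power_mono) (use exp_ge_add_one_self[of "1/10::real"] in auto)
  also have "exp (1/10::real) ^ 20 = exp (of_nat 20 * (1/10))" by (rule exp_of_nat_mult[symmetric])
  also have "\<dots> = exp 2" by simp
  finally have "(11/10::real) ^ 20 \<le> exp 2" .
  moreover have "(6::real) \<le> (11/10) ^ 20" by (simp add: power_numeral_reduce)
  ultimately show ?thesis by linarith
qed

lemma pow_ineq: "2 \<le> x \<Longrightarrow> (2::nat) ^ (x + 2) \<le> 6 ^ x"
proof (induction x rule: dec_induct)
  case base
  then show ?case by simp
next
  case (step n)
  then show ?case by simp
qed

lemma numeric:
  fixes r :: nat
  defines "Q \<equiv> 1 / 2 ^ (2 ^ r + 1) :: real" and "\<epsilon> \<equiv> exp (- (2 ^ Suc r)) :: real"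
  shows "(1 - 2*\<epsilon>) * Q^2 + 2*\<epsilon>*Q \<le> 1 / 2 ^ (2 ^ Suc r + 1)"
proof -
  define x :: nat where "x = 2 ^ r"
  have x1: "x \<ge> 1" unfolding x_def by simp
  have Qx: "Q = 1 / 2 ^ (x + 1)" unfolding Q_def x_def by simp
  have Qpos: "Q > 0" unfolding Qx by simp
  have tgt: "(1::real) / 2 ^ (2 ^ Suc r + 1) = 2 * Q^2"
  proof -
    have a: "2 ^ Suc r + 1 = (x + 1) * 2 - 1" by (simp add: x_def)
    have b: "(2::real) ^ ((x + 1) * 2 - 1) * 2 = 2 ^ ((x + 1) * 2)"
      by (subst power_Suc2[symmetric]) simp
    have "(1::real) / 2 ^ (2 ^ Suc r + 1) = 2 / 2 ^ ((x + 1) * 2)"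
      unfolding a using b by (simp add: field_simps)
    also have "\<dots> = 2 * Q^2" unfolding Qx power_mult by (simp add: field_simps)
    finally show ?thesis .
  qed
  have eps: "\<epsilon> = 1 / exp 2 ^ x"
  proof -
    have "\<epsilon> = exp (- (of_nat x * 2))" unfolding \<epsilon>_def x_def by simp
    also have "\<dots> = 1 / exp (of_nat x * 2)" by (simp add: exp_minus field_simps)
    also have "\<dots> = 1 / exp 2 ^ x" by (simp only: exp_of_nat_mult)
    finally show ?thesis .
  qed
  have e6: "\<epsilon> \<le> 1 / 6 ^ x"
    unfolding eps by (intro divide_left_mono power_mono exp2_ge6) auto
  have e0: "\<epsilon> \<ge> 0" unfolding \<epsilon>_def by simp
  have main: "2 * \<epsilon> * (1 - Q) \<le> Q"
  proof (cases "x = 1")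
    case True
    then have Q4: "Q = 1/4" unfolding Qx by simp
    have "\<epsilon> \<le> 1/6" using e6 True by simp
    then show ?thesis unfolding Q4 by simp
  next
    case False
    then have x2: "x \<ge> 2" using x1 by simp
    have "real (2 ^ (x + 2)) \<le> real (6 ^ x)" using pow_ineq[OF x2] by linarith
    then have p: "(2::real) ^ (x + 2) \<le> 6 ^ x" by simp
    have "2 * \<epsilon> \<le> 2 / 6 ^ x" using e6 by simp
    also have "\<dots> \<le> 2 / 2 ^ (x + 2)" using p by (intro divide_left_mono) auto
    also have "\<dots> = Q" unfolding Qx by (simp add: field_simps)
    finally have "2 * \<epsilon> \<le> Q" .
    moreover have "2 * \<epsilon> * (1 - Q) \<le> 2 * \<epsilon>" using e0 Qpos by (simp add: mult_left_le)
    ultimately show ?thesis by linarith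
  qed
  have "(1 - 2*\<epsilon>) * Q^2 + 2*\<epsilon>*Q = Q^2 + Q * (2 * \<epsilon> * (1 - Q))"
    by (simp add: algebra_simps power2_eq_square)
  also have "\<dots> \<le> Q^2 + Q * Q" using main Qpos by (intro add_left_mono mult_left_mono) auto
  also have "\<dots> = 1 / 2 ^ (2 ^ Suc r + 1)" using tgt by (simp add: power2_eq_square)
  finally show ?thesis .
qed



lemma large_count:
  fixes S :: "'a::linorder set"
  assumes fin: "finite S"
  shows "4 * card {x\<in>S. \<not> small S x} \<le> card S"
proof -
  define N where "N = card S"
  have lt: "rank S x < rank S y" if "x \<in> S" "y \<in> S" "x < y" for x y
  proof -
    have "{z \<in> S. z < x} \<subset> {z \<in> S. z < y}" using that by auto
    then show ?thesis unfolding rank_def using fin by (intro psubset_card_mono) auto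
  qed
  have inj: "inj_on (rank S) S"
  proof (rule inj_onI)
    fix x y assume "x \<in> S" "y \<in> S" "rank S x = rank S y"
    then show "x = y" using lt[of x y] lt[of y x] by (cases x y rule: linorder_cases) auto
  qed
  have ltN: "rank S x < N" if "x \<in> S" for x
  proof -
    have "{z \<in> S. z < x} \<subset> S" using that by auto
    then show ?thesis unfolding rank_def N_def using fin by (intro psubset_card_mono) auto
  qed
  have sub: "rank S ` {x\<in>S. \<not> small S x} \<subseteq> {3 * N div 4 + 1 ..< N}"
  proof
    fix j assume "j \<in> rank S ` {x\<in>S. \<not> small S x}"
    then obtain x where x: "x \<in> S" "\<not> small S x" "j = rank S x" by auto
    have "real (3 * N) < real (4 * j)" using x(2,3) unfolding small_def N_def by simp
    then have "3 * N < 4 * j" by linarith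
    then show "j \<in> {3 * N div 4 + 1 ..< N}" using ltN[OF x(1)] x(3) by auto
  qed
  have "card {x\<in>S. \<not> small S x} = card (rank S ` {x\<in>S. \<not> small S x})"
    using inj by (intro card_image[symmetric]) (auto intro: inj_on_subset)
  also have "\<dots> \<le> card {3 * N div 4 + 1 ..< N}" by (rule card_mono[OF _ sub]) simp
  also have "\<dots> = N - (3 * N div 4 + 1)" by simp
  finally have "card {x\<in>S. \<not> small S x} \<le> N - (3 * N div 4 + 1)" .
  moreover have "4 * (N - (3 * N div 4 + 1)) \<le> N"
  proof -
    have a: "3 * N = 4 * (3 * N div 4) + 3 * N mod 4" by simp
    have b: "3 * N mod 4 < 4" by simp
    from a b show ?thesis by linarith
  qed
  ultimately show ?thesis unfolding N_def by linarith
qed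

lemma W_base:
  fixes S :: "'a::linorder set"
  assumes fin: "finite S" and ne: "S \<noteq> {}" and l: "length sl = 1"
  shows "measure_pmf.prob (W S c err 0 sl) {z. \<not> small S (fst z)} \<le> 1 / 2 ^ (2 ^ 0 + 1)"
proof -
  obtain s where sl: "sl = [s]" using l by (cases sl) auto
  have "W S c err 0 sl = map_pmf (\<lambda>x. (x, s)) (pmf_of_set S)"
    unfolding W_def sl by (simp add: bind_assoc_pmf bind_return_pmf map_pmf_def)
  then have "measure_pmf.prob (W S c err 0 sl) {z. \<not> small S (fst z)} =
      measure_pmf.prob (pmf_of_set S) {x. \<not> small S x}" by (simp add: vimage_def)
  also have "\<dots> = card {x\<in>S. \<not> small S x} / card S"
    using fin ne by (simp add: measure_pmf_of_set Int_def)
  also have "\<dots> \<le> 1/4"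
  proof -
    have "card S > 0" using fin ne by (simp add: card_gt_0_iff)
    moreover have "real (4 * card {x\<in>S. \<not> small S x}) \<le> real (card S)"
      using large_count[OF fin] by linarith
    ultimately show ?thesis by (simp add: field_simps)
  qed
  finally show ?thesis by simp
qed

lemma W_bound:
  fixes S :: "'a::linorder set" and err :: "nat \<Rightarrow> ('a \<times> nat) \<Rightarrow> ('a \<times> nat) \<Rightarrow> nat \<Rightarrow> real"
  assumes fin: "finite S" and ne: "S \<noteq> {}" and c: "c > 0"
    and H: "\<forall>(t::real) (m::nat) (e::nat \<Rightarrow> real). t \<ge> 0 \<longrightarrow> real m = 2 * real c * t + 1 \<longrightarrow>
           (\<forall>j. 0 \<le> e j \<and> e j \<le> p) \<longrightarrow>
           measure_pmf.prob (errs_pmf e m) {w. 2 * w < m} \<ge> 1 - exp (- t)"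
    and E: "\<forall>i x y j. 0 \<le> err i x y j \<and> err i x y j \<le> p"
  shows "length sl = 2 ^ r \<Longrightarrow>
    measure_pmf.prob (W S c err r sl) {z. \<not> small S (fst z)} \<le> 1 / 2 ^ (2 ^ r + 1)"
proof (induction r arbitrary: sl)
  case 0
  then show ?case using W_base[OF fin ne] by simp
next
  case (Suc r)
  define sl1 where "sl1 = take (2^r) sl"
  define sl2 where "sl2 = drop (2^r) sl"
  have l1: "length sl1 = 2^r" and l2: "length sl2 = 2^r" using Suc.prems by (auto simp: sl1_def sl2_def)
  have sl: "sl = sl1 @ sl2" by (simp add: sl1_def sl2_def)
  define \<epsilon> :: real where "\<epsilon> = exp (- (2 ^ Suc r))"
  have e0: "0 \<le> \<epsilon>" by (simp add: \<epsilon>_def)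
  have e1: "\<epsilon> \<le> 1/2"
  proof -
    have "(1::real) \<le> 2 ^ r" by simp
    then have "(2::real) \<le> 2 ^ Suc r" by simp
    then have "\<epsilon> \<le> exp (- 2)" unfolding \<epsilon>_def by simp
    also have "\<dots> = 1 / exp 2" by (simp add: exp_minus field_simps)
    also have "\<dots> \<le> 1 / 6" using exp2_ge6 by (intro divide_left_mono) auto
    finally show ?thesis by simp
  qed
  have "measure_pmf.prob (W S c err (Suc r) sl) {z. \<not> small S (fst z)}
      \<le> (1 - 2*\<epsilon>) * (1 / 2 ^ (2 ^ r + 1))^2 + 2*\<epsilon>*(1 / 2 ^ (2 ^ r + 1))"
    unfolding sl W_step[OF l1 l2]
  proof (rule comb[OF Suc.IH[OF l1] Suc.IH[OF l2] e0 e1])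
    fix u v
    show "measure_pmf.prob (F c err (Suc r) u v) {z. \<not> small S (fst z)} \<le>
      (if \<not> small S (fst u) \<and> \<not> small S (fst v) then 1
       else if \<not> small S (fst u) \<or> \<not> small S (fst v) then \<epsilon> else 0)"
      unfolding \<epsilon>_def using match_bound[OF fin c H E, of "Suc r" u v] by simp
  qed
  also have "\<dots> \<le> 1 / 2 ^ (2 ^ Suc r + 1)" unfolding \<epsilon>_def by (rule numeric)
  finally show ?case .
qed



theorem lemma8:
  fixes S :: "'a::linorder set" and N n k c :: nat and p :: real
    and err :: "nat \<Rightarrow> ('a \<times> nat) \<Rightarrow> ('a \<times> nat) \<Rightarrow> nat \<Rightarrow> real"
  assumes "finite S" and "S \<noteq> {}" and "card S = N"
    and "n = 2 ^ k"
    and "0 \<le> p" and "p < 1/2"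
    and "c > 0"
    and "\<forall>(t::real) (m::nat) (e::nat \<Rightarrow> real). t \<ge> 0 \<longrightarrow> real m = 2 * real c * t + 1 \<longrightarrow>
           (\<forall>j. 0 \<le> e j \<and> e j \<le> p) \<longrightarrow>
           measure_pmf.prob (errs_pmf e m) {w. 2 * w < m} \<ge> 1 - exp (- t)"
    and "\<forall>i x y j. 0 \<le> err i x y j \<and> err i x y j \<le> p"
  shows "measure_pmf.prob (tournament S c err k) {w. small S w} \<ge> 1 - 1 / 2 ^ (n + 1)"
proof -
  let ?W = "W S c err k [0..<2^k]"
  have T: "tournament S c err k = map_pmf fst ?W"
    unfolding tournament_def W_def map_pmf_def by (simp add: bind_assoc_pmf bind_return_pmf)
  have b: "measure_pmf.prob ?W {z. \<not> small S (fst z)} \<le> 1 / 2 ^ (2 ^ k + 1)"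
    by (rule W_bound[OF assms(1,2,7,8,9)]) simp
  have "measure_pmf.prob (tournament S c err k) {w. small S w} = measure_pmf.prob ?W {z. small S (fst z)}"
    unfolding T by (simp add: vimage_def)
  also have "\<dots> = measure_pmf.prob ?W (UNIV - {z. \<not> small S (fst z)})"
    by (rule arg_cong[where f="measure_pmf.prob ?W"]) auto
  also have "\<dots> = 1 - measure_pmf.prob ?W {z. \<not> small S (fst z)}"
    using measure_pmf.prob_compl[of "{z. \<not> small S (fst z)}" ?W] by simp
  finally show ?thesis using b assms(4) by simp
qed


end
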